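(* Let $k \geq 2$ be an integer. Suppose that, for each $k$-admissible integer $n \geq 2k$, every non-reducible partial $k$-star design of order $n$ with at most $u(n,k)$ stars is completable. Then, for each $k$-admissible integer $n \geq 2k$, every partial $k$-star design of order $n$ with at most $u(n,k)$ stars is completable.
   Context: A $k$-star is a copy of $K_{1,k}$; its vertex of degree $k$ is the centre and the others are leaves. A partial $k$-star design of order $n$ is a pair $(V,\mathcal{A})$ where $V$ is a set of $n$ vertices and $\mathcal{A}$ is a set of edge-disjoint $k$-stars that are subgraphs of the complete graph $K_V$; it is completable if there is a set $\mathcal{B}\supseteq\mathcal{A}$ of edge-disjoint $k$-stars in $K_V$ covering all edges of $K_V$. A positive integer $n$ is $k$-admissible if $\binom{n}{2}\equiv 0 \pmod{k}$. Here \[u(n,k)= \begin{cases} 2 \lfloor \frac{n-2}{k} \rfloor-1 & \text{if $n \not \equiv 1\pmod{k}$},\\ \frac{2(n-1)}{k} - 2 & \text{if $n \equiv 1\pmod{k}$.} \end{cases} \] A partial $k$-star design $(V,\mathcal{A})$ of order $n$ is reducible if $n \equiv 1 \pmod{k}$, $|\mathcal{A}|=u(n,k)$, and there is a vertex which is the centre of at least one star in $\mathcal{A}$ and is not a leaf of any star in $\mathcal{A}$; otherwise it is non-reducible. *)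

theory Defs
  imports Main
begin

text \<open>A k-star in K_V is represented by a pair (centre, set of leaves).\<close>

definition star_edges :: "nat \<times> nat set \<Rightarrow> nat set set" where
  "star_edges S = {{fst S, x} | x. x \<in> snd S}"

definition is_k_star :: "nat \<Rightarrow> nat set \<Rightarrow> nat \<times> nat set \<Rightarrow> bool" where
  "is_k_star k V S \<longleftrightarrow> fst S \<in> V \<and> snd S \<subseteq> V \<and> fst S \<notin> snd S \<and> card (snd S) = k"

definition complete_edges :: "nat set \<Rightarrow> nat set set" where
  "complete_edges V = {{x, y} | x y. x \<in> V \<and> y \<in> V \<and> x \<noteq> y}"

definition partial_star_design :: "nat \<Rightarrow> nat set \<Rightarrow> (nat \<times> nat set) set \<Rightarrow> bool" where
  "partial_star_design k V A \<longleftrightarrow> finite V \<and> (\<forall>S\<in>A. is_k_star k V S) \<and>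
     (\<forall>S\<in>A. \<forall>T\<in>A. S \<noteq> T \<longrightarrow> star_edges S \<inter> star_edges T = {})"

definition completable :: "nat \<Rightarrow> nat set \<Rightarrow> (nat \<times> nat set) set \<Rightarrow> bool" where
  "completable k V A \<longleftrightarrow> (\<exists>B. A \<subseteq> B \<and> partial_star_design k V B \<and>
     (\<Union>S\<in>B. star_edges S) = complete_edges V)"

definition admissible :: "nat \<Rightarrow> nat \<Rightarrow> bool" where
  "admissible k n \<longleftrightarrow> (n choose 2) mod k = 0"

definition u :: "nat \<Rightarrow> nat \<Rightarrow> int" where
  "u n k = (if n mod k \<noteq> 1 mod k then 2 * ((int n - 2) div int k) - 1
            else 2 * (int n - 1) div int k - 2)"

definition reducible :: "nat \<Rightarrow> nat set \<Rightarrow> (nat \<times> nat set) set \<Rightarrow> bool" where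
  "reducible k V A \<longleftrightarrow> card V mod k = 1 mod k \<and> int (card A) = u (card V) k \<and>
     (\<exists>x. (\<exists>L. (x, L) \<in> A) \<and> (\<forall>S\<in>A. x \<notin> snd S))"

end

theory Submission
  imports Defs
begin

lemma partition_k:
  assumes "finite R" "k dvd card R" "k > 0"
  shows "\<exists>P. (\<forall>p\<in>P. p \<subseteq> R \<and> card p = k) \<and> (\<forall>p\<in>P. \<forall>q\<in>P. p \<noteq> q \<longrightarrow> p \<inter> q = {}) \<and> \<Union>P = R"
  using assms
proof (induction "card R div k" arbitrary: R)
  case 0
  then have "card R = 0" by auto
  then have "R = {}" using 0 by auto
  then show ?case by (intro exI[of _ "{}"]) auto
next
  case (Suc m)
  have "card R = k * (card R div k)" using Suc.prems(2) by simp
  then have cRk: "card R = k * Suc m" using Suc(2)[symmetric] by simp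
  have "card R \<ge> k" using cRk by simp
  then obtain p where p: "p \<subseteq> R" "card p = k"
    by (meson obtain_subset_with_card_n)
  have fin: "finite p" using p Suc(3) finite_subset by blast
  have cR: "card (R - p) = card R - k" using p fin by (simp add: card_Diff_subset)
  have "card (R - p) = k * m" using cR cRk by simp
  then have h1: "m = card (R - p) div k" using Suc.prems(3) by simp
  have h2: "k dvd card (R - p)" using cR Suc.prems by simp
  have h3: "finite (R - p)" using Suc.prems by simp
  note IH = Suc.hyps(1)[OF h1 h3 h2 Suc.prems(3)]
  from IH obtain P where P: "\<forall>r\<in>P. r \<subseteq> R - p \<and> card r = k"
     "\<forall>r\<in>P. \<forall>q\<in>P. r \<noteq> q \<longrightarrow> r \<inter> q = {}" "\<Union>P = R - p"
    by (elim exE conjE) (intro that)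
  have A1: "\<forall>r\<in>insert p P. r \<subseteq> R \<and> card r = k" using P(1) p by blast
  have A2: "\<forall>r\<in>insert p P. \<forall>q\<in>insert p P. r \<noteq> q \<longrightarrow> r \<inter> q = {}"
    using P(1,2) by blast
  have A3: "\<Union>(insert p P) = R" using P(3) p by blast
  show ?case using A1 A2 A3 by blast
qed

lemma edges_avoid:
  "fst S \<noteq> x \<Longrightarrow> x \<notin> snd S \<Longrightarrow> e \<in> star_edges S \<Longrightarrow> x \<notin> e"
  unfolding star_edges_def by auto

lemma edges_contain:
  "fst S = x \<Longrightarrow> e \<in> star_edges S \<Longrightarrow> x \<in> e"
  unfolding star_edges_def by auto

lemma edges_same_centre:
  assumes "fst S = x" "fst T = x" "x \<notin> snd S" "x \<notin> snd T" "snd S \<inter> snd T = {}"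
  shows "star_edges S \<inter> star_edges T = {}"
  using assms unfolding star_edges_def by (auto simp: doubleton_eq_iff)

lemma star_sub_complete:
  "is_k_star k V S \<Longrightarrow> star_edges S \<subseteq> complete_edges V"
  unfolding star_edges_def complete_edges_def is_k_star_def by blast


lemma reduce:
  assumes k: "k \<ge> 2" and psd: "partial_star_design k V A"
    and nk: "(card V - 1) mod k = 0"
    and xA: "(x, L) \<in> A" and nl: "\<forall>S\<in>A. x \<notin> snd S"
    and comp: "completable k (V - {x}) (A - {S\<in>A. fst S = x})"
  shows "completable k V A"
proof -
  define Ax where "Ax = {S\<in>A. fst S = x}"
  define Lx where "Lx = \<Union>(snd ` Ax)"
  have finV: "finite V" using psd unfolding partial_star_design_def by auto
  have stars: "\<And>S. S \<in> A \<Longrightarrow> is_k_star k V S" using psd unfolding partial_star_design_def by auto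
  have disjA: "\<And>S T. S \<in> A \<Longrightarrow> T \<in> A \<Longrightarrow> S \<noteq> T \<Longrightarrow> star_edges S \<inter> star_edges T = {}"
    using psd unfolding partial_star_design_def by auto
  have AVP: "A \<subseteq> V \<times> Pow V" using stars unfolding is_k_star_def by force
  have finA: "finite A" using finite_subset[OF AVP] finV by auto
  have finAx: "finite Ax" unfolding Ax_def using finA by auto
  have xV: "x \<in> V" using stars[OF xA] unfolding is_k_star_def by auto
  have LxV: "Lx \<subseteq> V - {x}" unfolding Lx_def Ax_def using stars nl unfolding is_k_star_def by fastforce
  have injs: "inj_on snd Ax" unfolding Ax_def inj_on_def by (simp add: prod_eq_iff)
  have leafdisj: "\<And>S T. S \<in> Ax \<Longrightarrow> T \<in> Ax \<Longrightarrow> S \<noteq> T \<Longrightarrow> snd S \<inter> snd T = {}"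
  proof -
    fix S T assume S: "S \<in> Ax" and T: "T \<in> Ax" and ST: "S \<noteq> T"
    show "snd S \<inter> snd T = {}"
    proof (rule ccontr)
      assume "snd S \<inter> snd T \<noteq> {}"
      then obtain y where "y \<in> snd S" "y \<in> snd T" by auto
      then have "{x, y} \<in> star_edges S" "{x, y} \<in> star_edges T"
        using S T unfolding Ax_def star_edges_def by auto
      then show False using disjA[OF _ _ ST] S T unfolding Ax_def by auto
    qed
  qed
  have pw: "pairwise disjnt (snd ` Ax)"
    unfolding pairwise_def disjnt_def
  proof (intro ballI impI)
    fix X Y assume X: "X \<in> snd ` Ax" and Y: "Y \<in> snd ` Ax" and XY: "X \<noteq> Y"
    obtain S where S: "S \<in> Ax" "X = snd S" using X by blast
    obtain T where T: "T \<in> Ax" "Y = snd T" using Y by blast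
    have "S \<noteq> T" using S T XY by blast
    then show "X \<inter> Y = {}" using leafdisj[OF S(1) T(1)] S T by simp
  qed
  have fins: "\<And>X. X \<in> snd ` Ax \<Longrightarrow> finite X"
  proof -
    fix X assume "X \<in> snd ` Ax"
    then obtain S where S: "S \<in> A" "X = snd S" unfolding Ax_def by blast
    have "X \<subseteq> V" using stars[OF S(1)] S(2) unfolding is_k_star_def by simp
    then show "finite X" using finV finite_subset by blast
  qed
  have cardLx: "card Lx = k * card Ax"
  proof -
    have "card Lx = sum card (snd ` Ax)" unfolding Lx_def by (rule card_Union_disjoint[OF pw fins])
    also have "\<dots> = sum (\<lambda>S. card (snd S)) Ax" using sum.reindex[OF injs] by simp
    also have "\<dots> = sum (\<lambda>S. k) Ax"
    proof (rule sum.cong)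
      fix S assume "S \<in> Ax"
      then show "card (snd S) = k" using stars unfolding Ax_def is_k_star_def by simp
    qed simp
    finally show ?thesis by simp
  qed
  define R where "R = (V - {x}) - Lx"
  have finR: "finite R" unfolding R_def using finV by auto
  have cardR: "card R = (card V - 1) - k * card Ax"
  proof -
    have fL: "finite Lx" using finite_subset[OF LxV] finV by blast
    have c1: "card (V - {x}) = card V - 1" using xV finV by simp
    have "card R = card (V - {x}) - card Lx" unfolding R_def by (rule card_Diff_subset[OF fL LxV])
    then show ?thesis using c1 cardLx by simp
  qed
  have d1: "k dvd (card V - 1)" using nk by (rule mod_0_imp_dvd)
  have d2: "k dvd k * card Ax" by simp
  have dR: "k dvd card R" unfolding cardR by (rule dvd_diff_nat[OF d1 d2])
  have k0: "k > 0" using k by simp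
  from partition_k[OF finR dR k0] obtain P where P: "\<forall>p\<in>P. p \<subseteq> R \<and> card p = k" "\<forall>p\<in>P. \<forall>q\<in>P. p \<noteq> q \<longrightarrow> p \<inter> q = {}" "\<Union>P = R"
    by (elim exE conjE) (intro that)
  obtain B' where B': "A - Ax \<subseteq> B'" "partial_star_design k (V - {x}) B'"
     "(\<Union>S\<in>B'. star_edges S) = complete_edges (V - {x})"
    using comp unfolding completable_def Ax_def by auto
  have B'stars: "\<And>S. S \<in> B' \<Longrightarrow> is_k_star k (V - {x}) S" using B'(2) unfolding partial_star_design_def by auto
  have B'x: "\<And>S. S \<in> B' \<Longrightarrow> fst S \<noteq> x \<and> x \<notin> snd S"
  proof -
    fix S assume "S \<in> B'"
    then have "fst S \<in> V - {x}" "snd S \<subseteq> V - {x}" using B'stars unfolding is_k_star_def by auto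
    then show "fst S \<noteq> x \<and> x \<notin> snd S" by blast
  qed
  define C where "C = Ax \<union> (\<lambda>p. (x, p)) ` P"
  have PR: "\<And>p. p \<in> P \<Longrightarrow> p \<subseteq> R \<and> card p = k" using P(1) by blast
  have xR: "x \<notin> R" unfolding R_def by blast
  have RV: "R \<subseteq> V" unfolding R_def by blast
  have Cx: "\<And>S. S \<in> C \<Longrightarrow> fst S = x \<and> x \<notin> snd S"
  proof -
    fix S assume "S \<in> C"
    then consider "S \<in> Ax" | p where "p \<in> P" "S = (x, p)" unfolding C_def by blast
    then show "fst S = x \<and> x \<notin> snd S"
    proof cases
      case 1 then show ?thesis using nl unfolding Ax_def by blast
    next
      case 2 then show ?thesis using PR[of p] xR by auto
    qed
  qed
  have Cstars: "\<And>S. S \<in> C \<Longrightarrow> is_k_star k V S"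
  proof -
    fix S assume "S \<in> C"
    then consider "S \<in> Ax" | p where "p \<in> P" "S = (x, p)" unfolding C_def by blast
    then show "is_k_star k V S"
    proof cases
      case 1 then show ?thesis using stars unfolding Ax_def by blast
    next
      case 2 then show ?thesis using PR[of p] xR RV xV unfolding is_k_star_def by auto
    qed
  qed
  have AxL: "\<And>U. U \<in> Ax \<Longrightarrow> snd U \<subseteq> Lx" unfolding Lx_def by blast
  have LR: "Lx \<inter> R = {}" unfolding R_def by blast
  have Cdisj: "\<And>S T. S \<in> C \<Longrightarrow> T \<in> C \<Longrightarrow> S \<noteq> T \<Longrightarrow> snd S \<inter> snd T = {}"
  proof -
    fix S T assume S: "S \<in> C" and T: "T \<in> C" and ST: "S \<noteq> T"
    from S consider "S \<in> Ax" | p where "p \<in> P" "S = (x, p)" unfolding C_def by blast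
    then show "snd S \<inter> snd T = {}"
    proof cases
      case 1
      note S1 = 1
      from T consider "T \<in> Ax" | q where "q \<in> P" "T = (x, q)" unfolding C_def by blast
      then show ?thesis
      proof cases
        case 1 then show ?thesis using leafdisj[OF S1 _ ST] by blast
      next
        case 2 then show ?thesis using AxL[OF S1] PR[of q] LR by auto
      qed
    next
      case 2
      note S2 = 2
      from T consider "T \<in> Ax" | q where "q \<in> P" "T = (x, q)" unfolding C_def by blast
      then show ?thesis
      proof cases
        case 1 then show ?thesis using AxL[OF 1] PR[of p] LR S2 by auto
      next
        case 2
        then have "p \<noteq> q" using S2 ST by auto
        then show ?thesis using P(2) S2 2 by auto
      qed
    qed
  qed
  define B where "B = B' \<union> C"
  have AB: "A \<subseteq> B" unfolding B_def C_def using B'(1) by auto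
  have psdB: "partial_star_design k V B"
    unfolding partial_star_design_def
  proof (intro conjI ballI impI)
    show "finite V" by fact
  next
    fix S assume "S \<in> B"
    then consider "S \<in> B'" | "S \<in> C" unfolding B_def by blast
    then show "is_k_star k V S"
    proof cases
      case 1
      then have "is_k_star k (V - {x}) S" by (rule B'stars)
      then show ?thesis unfolding is_k_star_def by blast
    next
      case 2 then show ?thesis by (rule Cstars)
    qed
  next
    fix S T assume S: "S \<in> B" and T: "T \<in> B" and ST: "S \<noteq> T"
    show "star_edges S \<inter> star_edges T = {}"
    proof (cases "S \<in> B'")
      case True
      note SB = True
      show ?thesis
      proof (cases "T \<in> B'")
        case True
        then show ?thesis using SB ST B'(2) unfolding partial_star_design_def by auto
      next
        case False
        then have "T \<in> C" using T unfolding B_def by auto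
        then show ?thesis using edges_avoid[of S x] edges_contain[of T x] B'x[OF SB] Cx by blast
      qed
    next
      case False
      then have SC: "S \<in> C" using S unfolding B_def by auto
      show ?thesis
      proof (cases "T \<in> B'")
        case True
        then show ?thesis using edges_avoid[of T x] edges_contain[of S x] B'x Cx[OF SC] by blast
      next
        case False
        then have "T \<in> C" using T unfolding B_def by auto
        then show ?thesis using edges_same_centre[of S x T] Cx SC Cdisj ST by auto
      qed
    qed
  qed
  have cov: "(\<Union>S\<in>B. star_edges S) = complete_edges V"
  proof
    show "(\<Union>S\<in>B. star_edges S) \<subseteq> complete_edges V"
      using psdB star_sub_complete unfolding partial_star_design_def by blast
  next
    show "complete_edges V \<subseteq> (\<Union>S\<in>B. star_edges S)"
    proof
      fix e assume "e \<in> complete_edges V"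
      then obtain a b where e: "e = {a, b}" "a \<in> V" "b \<in> V" "a \<noteq> b"
        unfolding complete_edges_def by auto
      have key: "{x, y} \<in> (\<Union>S\<in>B. star_edges S)" if y: "y \<in> V" "y \<noteq> x" for y
      proof (cases "y \<in> Lx")
        case True
        then obtain S where "S \<in> Ax" "y \<in> snd S" unfolding Lx_def by auto
        then show ?thesis unfolding B_def C_def Ax_def star_edges_def by force
      next
        case False
        then have "y \<in> R" unfolding R_def using y by auto
        then obtain p where "p \<in> P" "y \<in> p" using P(3) by auto
        then show ?thesis unfolding B_def C_def star_edges_def by force
      qed
      show "e \<in> (\<Union>S\<in>B. star_edges S)"
      proof (cases "a = x \<or> b = x")
        case True
        then show ?thesis using key e by (metis insert_commute)
      next
        case False
        then have "e \<in> complete_edges (V - {x})" using e unfolding complete_edges_def by auto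
        then show ?thesis using B'(3) unfolding B_def by auto
      qed
    qed
  qed
  show ?thesis unfolding completable_def using AB psdB cov by blast
qed


lemma div_aux: "(k::int) \<ge> 2 \<Longrightarrow> (k * q - 2) div k = q - 1"
proof -
  assume k: "k \<ge> 2"
  have "k * q - 2 = (k - 2) + (q - 1) * k" by (simp add: algebra_simps)
  then have "(k * q - 2) div k = ((k - 2) + (q - 1) * k) div k" by (rule arg_cong[where f="\<lambda>t. t div k"])
  also have "\<dots> = (k - 2) div k + (q - 1)" using k by simp
  also have "(k - 2) div k = 0" using k by simp
  finally show ?thesis by simp
qed

theorem lemma7:
  fixes k :: nat
  assumes "k \<ge> 2"
    and "\<forall>n V A. admissible k n \<and> n \<ge> 2 * k \<and> finite V \<and> card V = n \<and>
           partial_star_design k V A \<and> \<not> reducible k V A \<and> int (card A) \<le> u n k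
           \<longrightarrow> completable k V A"
  shows "\<forall>n V A. admissible k n \<and> n \<ge> 2 * k \<and> finite V \<and> card V = n \<and>
           partial_star_design k V A \<and> int (card A) \<le> u n k
           \<longrightarrow> completable k V A"
proof (intro allI impI)
  fix n V A
  assume H: "admissible k n \<and> n \<ge> 2 * k \<and> finite V \<and> card V = n \<and>
           partial_star_design k V A \<and> int (card A) \<le> u n k"
  have k: "k \<ge> 2" by fact
  show "completable k V A"
  proof (cases "reducible k V A")
    case False
    then show ?thesis using assms(2) H by blast
  next
    case True
    then have nm: "n mod k = 1" and cA: "int (card A) = u n k"
      and ex: "\<exists>x. (\<exists>L. (x, L) \<in> A) \<and> (\<forall>S\<in>A. x \<notin> snd S)"
      using H k unfolding reducible_def by auto
    obtain x L where xL: "(x, L) \<in> A" and nl: "\<forall>S\<in>A. x \<notin> snd S" using ex by auto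
    define q where "q = n div k"
    have nq: "n = k * q + 1" unfolding q_def using nm by (metis div_mult_mod_eq mult.commute)
    have q2: "q \<ge> 2"
    proof (rule ccontr)
      assume "\<not> q \<ge> 2"
      then have "q \<le> 1" by auto
      then have "k * q \<le> k" by simp
      then show False using H nq k by linarith
    qed
    have stars: "\<And>S. S \<in> A \<Longrightarrow> is_k_star k V S" using H unfolding partial_star_design_def by auto
    have xV: "x \<in> V" using stars[OF xL] unfolding is_k_star_def by auto
    define A0 where "A0 = A - {S\<in>A. fst S = x}"
    have finA: "finite A"
    proof -
      have "A \<subseteq> V \<times> Pow V" using stars unfolding is_k_star_def by force
      then show ?thesis using finite_subset H by blast
    qed
    have cA0: "card A0 < card A"
    proof (rule psubset_card_mono[OF finA])
      have "(x, L) \<notin> A0" unfolding A0_def using xL by auto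
      then show "A0 \<subset> A" unfolding A0_def using xL by blast
    qed
    have cV: "card (V - {x}) = n - 1" using H xV by simp
    have adm: "admissible k (n - 1)"
    proof -
      have "n choose 2 = ((k * q) choose 1) + ((k * q) choose 2)"
        unfolding nq by (simp add: numeral_2_eq_2)
      then have "n choose 2 = k * q + ((k * q) choose 2)" by simp
      then show ?thesis using H nq unfolding admissible_def by (simp add: mod_add_left_eq[symmetric])
    qed
    have un: "u n k = 2 * int q - 2"
    proof -
      have "n mod k = 1 mod k" using nm k by simp
      then have "u n k = 2 * (int n - 1) div int k - 2" unfolding u_def by simp
      also have "2 * (int n - 1) = int k * (2 * int q)" using nq by simp
      finally show ?thesis using k by simp
    qed
    have un1: "u (n - 1) k = 2 * int q - 3"
    proof -
      have "(n - 1) mod k \<noteq> 1 mod k" using nq k by simp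
      then have "u (n - 1) k = 2 * ((int (n - 1) - 2) div int k) - 1" unfolding u_def by simp
      also have "int (n - 1) - 2 = int k * int q - 2" using nq by simp
      also have "(int k * int q - 2) div int k = int q - 1" using div_aux[of "int k" "int q"] k by simp
      finally show ?thesis by simp
    qed
    have psd0: "partial_star_design k (V - {x}) A0"
      using H nl unfolding partial_star_design_def A0_def is_k_star_def by auto
    have nred: "\<not> reducible k (V - {x}) A0"
      unfolding reducible_def cV using nq k by simp
    have "completable k (V - {x}) A0"
      using assms(2)[rule_format, of "n - 1" "V - {x}" A0] adm H nq k cV psd0 nred cA0 cA un un1
      by auto
    then show ?thesis
      using reduce[OF k _ _ xL nl] H nq unfolding A0_def by simp
  qed
qed

end
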